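(* Let $\mathcal{H}$ be the space of real or complex $m\times n$ matrices with Frobenius inner product, $r\ge2$, and $\Sigma=\Sigma_r$ the set of matrices of rank at most $r$. Then uniform recovery of $\Sigma_r$ with the regularizer $\|\cdot\|_\Sigma$ is impossible: the descent set $\mathcal{T}_{\|\cdot\|_\Sigma}(\Sigma)$ equals $\mathcal{E}(\Sigma)$, so that for every linear operator $M$ on $\mathcal{H}$ with nontrivial null space there exists $x_0\in\Sigma_r$ which is not the unique minimizer of $\min_x\|x\|_\Sigma$ subject to $Mx=Mx_0$.
   Context: $\|\cdot\|_\Sigma$ is the atomic norm with atoms $\Sigma\cap S(1)$ ($S(1)$ the unit Frobenius sphere): $\|x\|_\Sigma=\inf\{t\ge0:x\in t\cdot\overline{\mathrm{conv}}(\Sigma\cap S(1))\}$, $+\infty$ if none; $\mathcal{E}(\Sigma)=\{x:\|x\|_\Sigma<\infty\}$. Descent set: $\mathcal{T}_f(\Sigma)=\bigcup_{x\in\Sigma}\{z:f(x+z)\le f(x)\}$. *)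

theory Defs
  imports "HOL-Analysis.Analysis"
begin

definition low_rank :: "nat \<Rightarrow> ('k::field ^'n^'m) set" where
  "low_rank r = {A. rank A \<le> r}"

text \<open>Atomic norm with atoms S intersected with the unit sphere; value +infinity if no t exists.
  The norm of the matrix types is the Frobenius norm.\<close>
definition atomic_norm :: "'a::real_normed_vector set \<Rightarrow> 'a \<Rightarrow> ereal" where
  "atomic_norm S x =
     Inf {ereal t | t. t \<ge> 0 \<and> x \<in> (\<lambda>y. t *\<^sub>R y) ` closure (convex hull (S \<inter> sphere 0 1))}"

definition finite_atomic :: "'a::real_normed_vector set \<Rightarrow> 'a set" where
  "finite_atomic S = {x. atomic_norm S x < \<infinity>}"

definition descent_set :: "('a::real_vector \<Rightarrow> ereal) \<Rightarrow> 'a set \<Rightarrow> 'a set" where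
  "descent_set f S = (\<Union>x\<in>S. {z. f (x + z) \<le> f x})"

end

theory Submission imports Defs begin


definition E :: "'m \<times> 'n \<Rightarrow> 'k::real_normed_field \<Rightarrow> 'k^'n^'m" where
  "E p a = (\<chi> i j. if (i,j) = p then a else 0)"

lemma E_nth: "E p a $ i $ j = (if (i,j) = p then a else 0)"
  by (simp add: E_def)

lemma rank_E2: "rank (E p a + E q b) \<le> 2"
proof -
  let ?A = "E p a + E q b"
  have "rows ?A \<subseteq> vec.span {row (fst p) ?A, row (fst q) ?A}"
  proof
    fix v assume "v \<in> rows ?A"
    then obtain i where v: "v = row i ?A" by (auto simp: rows_def)
    show "v \<in> vec.span {row (fst p) ?A, row (fst q) ?A}"
    proof (cases "i = fst p \<or> i = fst q")
      case True then show ?thesis using v by (auto intro: vec.span_base)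
    next
      case False
      then have "v = 0" unfolding v by (cases p, cases q) (auto simp: vec_eq_iff row_def E_nth)
      then show ?thesis by (simp add: vec.span_zero)
    qed
  qed
  then have "vec.dim (rows ?A) \<le> card {row (fst p) ?A, row (fst q) ?A}"
    by (intro vec.dim_le_card) auto
  also have "\<dots> \<le> 2" by (simp add: card_insert_if)
  finally show ?thesis by (simp add: row_rank_def_gen)
qed

lemma E_add: "E p a + E p b = E p (a + b)"
  by (simp add: vec_eq_iff E_nth)

lemma E_zero: "E p 0 = 0"
  by (simp add: vec_eq_iff E_nth)

lemma E_scale: "c *\<^sub>R E p a = E p (c *\<^sub>R a)"
  by (simp add: vec_eq_iff E_nth)

lemma norm_sq_matrix: "(norm (A::'k::real_normed_field^'n^'m))\<^sup>2 = (\<Sum>q\<in>UNIV. (norm (A $ fst q $ snd q))\<^sup>2)"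
proof -
  have "(norm A)\<^sup>2 = (\<Sum>i\<in>UNIV. (norm (A$i))\<^sup>2)"
    unfolding norm_vec_def L2_set_def by (simp add: sum_nonneg)
  also have "\<dots> = (\<Sum>i\<in>UNIV. \<Sum>j\<in>UNIV. (norm (A$i$j))\<^sup>2)"
    unfolding norm_vec_def L2_set_def by (simp add: sum_nonneg)
  also have "\<dots> = (\<Sum>q\<in>UNIV \<times> UNIV. (norm (A $ fst q $ snd q))\<^sup>2)"
    by (subst sum.cartesian_product') simp
  finally show ?thesis by (simp add: UNIV_Times_UNIV)
qed

lemma norm_E2:
  assumes "p \<noteq> q"
  shows "(norm (E p a + E q b :: 'k::real_normed_field^'n^'m))\<^sup>2 = (norm a)\<^sup>2 + (norm b)\<^sup>2"
proof -
  have "\<And>x. (norm ((E p a + E q b :: 'k^'n^'m) $ fst x $ snd x))\<^sup>2 =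
      (if x = p then (norm a)\<^sup>2 else 0) + (if x = q then (norm b)\<^sup>2 else 0)"
    using assms by (auto simp: E_nth)
  then show ?thesis unfolding norm_sq_matrix by (simp add: sum.distrib)
qed

lemma norm_E: "norm (E p a :: 'k::real_normed_field^'n^'m) = norm a"
proof -
  have "\<And>x. (norm ((E p a :: 'k^'n^'m) $ fst x $ snd x))\<^sup>2 = (if x = p then (norm a)\<^sup>2 else 0)"
    by (auto simp: E_nth)
  then have "(norm (E p a :: 'k^'n^'m))\<^sup>2 = (norm a)\<^sup>2" unfolding norm_sq_matrix by simp
  then show ?thesis by (simp add: power2_eq_iff_nonneg)
qed

lemma sum_E: "(\<Sum>q\<in>UNIV. E q (z $ fst q $ snd q)) = (z :: 'k::real_normed_field^'n^'m)"
proof -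
  have "\<And>i j. (\<Sum>q\<in>UNIV. (if (i,j) = q then z $ fst q $ snd q else 0)) = z$i$j"
    by (simp add: sum.delta)
  then show ?thesis by (simp add: vec_eq_iff E_nth)
qed


lemma atomic_norm_lower: "ereal (norm x) \<le> atomic_norm S x"
  unfolding atomic_norm_def
proof (rule Inf_greatest)
  fix e assume "e \<in> {ereal t |t. 0 \<le> t \<and> x \<in> (*\<^sub>R) t ` closure (convex hull (S \<inter> sphere 0 1))}"
  then obtain t y where t: "e = ereal t" "0 \<le> t" "x = t *\<^sub>R y"
    and y: "y \<in> closure (convex hull (S \<inter> sphere 0 1))" by auto
  have "convex hull (S \<inter> sphere 0 1) \<subseteq> cball 0 1"
    by (rule hull_minimal) auto
  then have "closure (convex hull (S \<inter> sphere 0 1)) \<subseteq> cball 0 1"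
    by (rule closure_minimal) auto
  with y have "norm y \<le> 1" by auto
  then have "norm x \<le> t" using t by (simp add: mult_left_le)
  then show "ereal (norm x) \<le> e" using t by simp
qed

lemma atomic_norm_upper:
  fixes y :: "'i \<Rightarrow> 'a::real_normed_vector"
  assumes I: "finite I" and sc: "\<And>j c. j \<in> I \<Longrightarrow> c > 0 \<Longrightarrow> c *\<^sub>R y j \<in> S"
    and ne: "S \<inter> sphere 0 1 \<noteq> {}"
  shows "atomic_norm S (sum y I) \<le> ereal (\<Sum>j\<in>I. norm (y j))"
proof -
  define T where "T = (\<Sum>j\<in>I. norm (y j))"
  define C where "C = convex hull (S \<inter> sphere 0 1)"
  have "\<exists>w \<in> closure C. sum y I = T *\<^sub>R w"
  proof (cases "T = 0")
    case True
    then have "\<forall>j\<in>I. norm (y j) = 0" unfolding T_def using I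
      by (simp add: sum_nonneg_eq_0_iff)
    then have "sum y I = 0" by simp
    moreover obtain a where "a \<in> S \<inter> sphere 0 1" using ne by blast
    then have "a \<in> closure C" unfolding C_def
      by (meson closure_subset hull_inc subsetD)
    ultimately show ?thesis using True by auto
  next
    case False
    then have Tp: "T > 0" unfolding T_def by (metis less_eq_real_def norm_ge_zero sum_nonneg)
    define J where "J = {j\<in>I. y j \<noteq> 0}"
    have J: "finite J" "J \<subseteq> I" using I by (auto simp: J_def)
    have sJ: "sum y I = sum y J"
      by (rule sum.mono_neutral_right) (use I in \<open>auto simp: J_def\<close>)
    have nJ: "T = (\<Sum>j\<in>J. norm (y j))" unfolding T_def
      by (rule sum.mono_neutral_right) (use I in \<open>auto simp: J_def\<close>)
    have "(\<Sum>j\<in>J. (norm (y j) / T) *\<^sub>R ((1 / norm (y j)) *\<^sub>R y j)) \<in> C"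
    proof (rule convex_sum[OF J(1)])
      show "convex C" unfolding C_def by simp
      show "(\<Sum>i\<in>J. norm (y i) / T) = 1" using nJ Tp by (simp add: sum_divide_distrib[symmetric])
      show "\<And>i. i \<in> J \<Longrightarrow> 0 \<le> norm (y i) / T" using Tp by simp
      fix i assume i: "i \<in> J"
      then have "y i \<noteq> 0" "i \<in> I" by (auto simp: J_def)
      then have "(1 / norm (y i)) *\<^sub>R y i \<in> S \<inter> sphere 0 1"
        using sc[of i "1 / norm (y i)"] by simp
      then show "(1 / norm (y i)) *\<^sub>R y i \<in> C" unfolding C_def by (rule hull_inc)
    qed
    moreover have "(\<Sum>j\<in>J. (norm (y j) / T) *\<^sub>R ((1 / norm (y j)) *\<^sub>R y j)) = (1/T) *\<^sub>R sum y J"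
      by (auto simp: scaleR_sum_right J_def intro!: sum.cong)
    ultimately have "(1/T) *\<^sub>R sum y I \<in> closure C" using sJ closure_subset by auto
    moreover have "sum y I = T *\<^sub>R ((1/T) *\<^sub>R sum y I)" using Tp by simp
    ultimately show ?thesis by blast
  qed
  then obtain w where "w \<in> closure C" "sum y I = T *\<^sub>R w" by blast
  moreover have "T \<ge> 0" unfolding T_def by (simp add: sum_nonneg)
  ultimately show ?thesis unfolding atomic_norm_def T_def[symmetric] C_def[symmetric]
    by (intro Inf_lower) auto
qed


lemma sqrt_bound:
  fixes t a :: real assumes "t > 0" "a \<ge> 0" "n \<ge> 0" "n^2 = t^2 + a"
  shows "n \<le> t + a / (2*t)"
proof -
  have "(t + a/(2*t))^2 = t^2 + a + (a/(2*t))^2" using assms(1) by (simp add: power2_eq_square field_simps)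
  then have "n^2 \<le> (t + a/(2*t))^2" using assms by simp
  then show ?thesis by (rule power2_le_imp_le) (use assms in simp)
qed

lemma main:
  fixes r :: nat
  assumes r: "r \<ge> 2"
  shows
   "descent_set (atomic_norm (low_rank r :: ('k::real_normed_field^'n^'m) set)) (low_rank r)
        = finite_atomic (low_rank r :: ('k^'n^'m) set)
     \<and> (\<forall>M :: 'k^'n^'m \<Rightarrow> 'k^'n^'m. linear M \<and> (\<exists>z. z \<noteq> 0 \<and> M z = 0) \<longrightarrow>
          (\<exists>x0 \<in> low_rank r. \<exists>x. x \<noteq> x0 \<and> M x = M x0 \<and>
             atomic_norm (low_rank r) x \<le> atomic_norm (low_rank r) x0))"
proof -
  define S where "S = (low_rank r :: ('k^'n^'m) set)"
  define N where "N = atomic_norm S"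
  have inS: "E p a + E q b \<in> S" for p q and a b :: 'k
    using rank_E2[of p a q b] r unfolding S_def low_rank_def by simp
  have scS: "c *\<^sub>R (E p a + E q b) \<in> S" for c p q and a b :: 'k
    using inS by (simp add: scaleR_add_right E_scale)
  obtain p0 :: "'m \<times> 'n" where True by blast
  have ne: "S \<inter> sphere 0 1 \<noteq> {}"
  proof -
    have "E p0 1 + E p0 0 \<in> S" by (rule inS)
    moreover have "norm (E p0 (1::'k) + E p0 0 :: 'k^'n^'m) = 1" by (simp add: E_add norm_E)
    ultimately show ?thesis by auto
  qed
  have fin: "N v < \<infinity>" for v
  proof -
    define w where "w q = E q (v $ fst q $ snd q) + E q 0" for q
    have v: "v = sum w UNIV"
      using sum_E[of v] by (simp add: E_add w_def)
    have "N (sum w UNIV) \<le> ereal (\<Sum>q\<in>UNIV. norm (w q))"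
      unfolding N_def by (rule atomic_norm_upper[OF finite _ ne]) (unfold w_def, rule scS)
    then have "N v \<le> ereal (\<Sum>q\<in>UNIV. norm (w q))" using v by simp
    also have "\<dots> < \<infinity>" by simp
    finally show ?thesis .
  qed
  have desc: "\<exists>x\<in>S. N (x + z) \<le> N x" for z
  proof (cases "z = 0")
    case True
    have "E p0 0 + E p0 0 \<in> S" by (rule inS)
    then have "(0::'k^'n^'m) \<in> S" by (simp add: E_zero)
    then show ?thesis using True by auto
  next
    case False
    define zz where "zz q = z $ fst q $ snd q" for q
    obtain p where p: "zz p \<noteq> 0" using False unfolding zz_def by (auto simp: vec_eq_iff)
    define c where "c = norm (zz p)"
    have cp: "c > 0" using p by (simp add: c_def)
    define u where "u = - zz p / of_real c"
    have nu: "norm u = 1" using cp by (simp add: u_def c_def norm_divide)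
    define Z where "Z = (\<Sum>q\<in>UNIV. (norm (zz q))\<^sup>2)"
    have Z0: "Z \<ge> 0" unfolding Z_def by (simp add: sum_nonneg)
    define K where "K = real CARD('m \<times> 'n)"
    define t where "t = c + Z / c"
    have tc: "t \<ge> c" using Z0 cp by (simp add: t_def)
    have tp: "t > 0" using tc cp by simp
    define y where "y q = E p (of_real t * u) + E q (zz q)" for q
    define x :: "'k^'n^'m" where "x = E p (of_real (K * t) * u)"
    have xS: "x \<in> S" using inS[of p "of_real (K * t) * u" p 0] by (simp add: x_def E_add)
    have sumy: "sum y UNIV = x + z"
    proof -
      have "sum y UNIV = (\<Sum>q\<in>(UNIV::('m\<times>'n) set). E p (of_real t * u)) + (\<Sum>q\<in>UNIV. E q (zz q))"
        unfolding y_def by (simp add: sum.distrib)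
      also have "(\<Sum>q\<in>UNIV. E q (zz q)) = z" unfolding zz_def by (rule sum_E)
      also have "(\<Sum>q\<in>(UNIV::('m\<times>'n) set). E p (of_real t * u)) = K *\<^sub>R E p (of_real t * u)"
        by (simp only: sum_constant_scaleR K_def)
      also have "\<dots> = x" unfolding E_scale x_def by (simp add: scaleR_conv_of_real mult.assoc)
      finally show ?thesis by simp
    qed
    define b where "b q = t + (norm (zz q))\<^sup>2 / (2*t) - (if q = p then c else 0)" for q
    have yb: "norm (y q) \<le> b q" for q
    proof (cases "q = p")
      case True
      have "of_real t * u + zz p = zz p * of_real (1 - t / c)"
        using cp by (simp add: u_def field_simps)
      then have "norm (y q) = norm (zz p * of_real (1 - t / c))"
        using True by (simp add: y_def E_add norm_E)
      also have "\<dots> = c * \<bar>1 - t/c\<bar>"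
        by (simp only: norm_mult norm_of_real c_def)
      also have "\<dots> = t - c" using cp tc by (simp add: abs_if field_simps)
      finally show ?thesis using True tp by (simp add: b_def)
    next
      case False
      have "(norm (y q))\<^sup>2 = t\<^sup>2 + (norm (zz q))\<^sup>2"
        unfolding y_def using False norm_E2[of p q "of_real t * u" "zz q"] tp nu
        by (simp add: norm_mult)
      then show ?thesis using False sqrt_bound[OF tp, of "(norm (zz q))\<^sup>2" "norm (y q)"]
        by (simp add: b_def)
    qed
    have "sum b UNIV = K * t + Z / (2*t) - c"
      unfolding b_def K_def Z_def by (simp add: sum.distrib sum_subtractf sum_divide_distrib[symmetric])
    also have "\<dots> \<le> K * t"
    proof -
      have "Z \<le> 2 * t * c" using cp Z0 by (simp add: t_def field_simps power2_eq_square)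
      then have "Z / (2*t) \<le> c" using tp by (simp add: divide_le_eq mult.commute)
      then show ?thesis by simp
    qed
    finally have sb: "(\<Sum>q\<in>UNIV. norm (y q)) \<le> K * t"
      using sum_mono[of UNIV "\<lambda>q. norm (y q)" b] yb by force
    have yS: "\<And>q c. c > 0 \<Longrightarrow> c *\<^sub>R y q \<in> S" unfolding y_def by (rule scS)
    have "N (x + z) \<le> ereal (\<Sum>q\<in>UNIV. norm (y q))"
      unfolding N_def sumy[symmetric] by (rule atomic_norm_upper[OF finite yS ne])
    also have "\<dots> \<le> ereal (norm x)"
    proof -
      have "norm x = K * t" using tp nu by (simp add: x_def norm_E norm_mult K_def)
      then show ?thesis using sb by simp
    qed
    also have "\<dots> \<le> N x" unfolding N_def by (rule atomic_norm_lower)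
    finally show ?thesis using xS by blast
  qed
  have part1: "descent_set N S = finite_atomic S"
  proof -
    have "descent_set N S = UNIV" using desc unfolding descent_set_def by blast
    moreover have "finite_atomic S = UNIV" using fin unfolding finite_atomic_def N_def by blast
    ultimately show ?thesis by simp
  qed
  have part2: "\<exists>x0 \<in> S. \<exists>x. x \<noteq> x0 \<and> M x = M x0 \<and> N x \<le> N x0"
    if M: "linear M" and z: "z \<noteq> 0" "M z = 0" for M :: "'k^'n^'m \<Rightarrow> 'k^'n^'m" and z
  proof -
    obtain x0 where x0: "x0 \<in> S" "N (x0 + z) \<le> N x0" using desc by blast
    have "M (x0 + z) = M x0" using M z by (simp add: linear_add)
    then show ?thesis using x0 z by (intro bexI[of _ x0] exI[of _ "x0 + z"]) auto
  qed
  show ?thesis using part1 part2 unfolding N_def S_def by blast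
qed


theorem proposition8:
  fixes r :: nat
  assumes "r \<ge> 2"
  shows
   "(descent_set (atomic_norm (low_rank r :: (real^'n^'m) set)) (low_rank r)
        = finite_atomic (low_rank r :: (real^'n^'m) set)
     \<and> (\<forall>M :: real^'n^'m \<Rightarrow> real^'n^'m. linear M \<and> (\<exists>z. z \<noteq> 0 \<and> M z = 0) \<longrightarrow>
          (\<exists>x0 \<in> low_rank r. \<exists>x. x \<noteq> x0 \<and> M x = M x0 \<and>
             atomic_norm (low_rank r) x \<le> atomic_norm (low_rank r) x0)))
  \<and> (descent_set (atomic_norm (low_rank r :: (complex^'n^'m) set)) (low_rank r)
        = finite_atomic (low_rank r :: (complex^'n^'m) set)
     \<and> (\<forall>M :: complex^'n^'m \<Rightarrow> complex^'n^'m. linear M \<and> (\<exists>z. z \<noteq> 0 \<and> M z = 0) \<longrightarrow>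
          (\<exists>x0 \<in> low_rank r. \<exists>x. x \<noteq> x0 \<and> M x = M x0 \<and>
             atomic_norm (low_rank r) x \<le> atomic_norm (low_rank r) x0)))"
  using main[OF assms, where 'k=real and 'n='n and 'm='m]
        main[OF assms, where 'k=complex and 'n='n and 'm='m] by blast

end
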